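(* Let $t\in\mathbb{R}$ and $m\in\mathbb{N}$. Define polynomials $B_n(t,m;x)$ by $$\sum_{n=0}^\infty B_n(t,m;x)\frac{z^n}{n!}=\left(\frac{z^m/m!}{e^z-\sum_{k=0}^{m-1}z^k/k!}\right)^te^{xz}$$ for $z$ in a neighborhood of $0$. Then for every $n\in\mathbb{N}_0$, $$B_n(t,m;0)=\sum_{k=0}^n\binom{-t}{k}\binom{n+t}{n-k}C(m,n,k),\qquad C(m,n,k)=n!\,(m!)^k\sum_{j_1+\cdots+j_k=n}\frac{1}{(m+j_1)!\cdots(m+j_k)!},$$ where the sum runs over $(j_1,\ldots,j_k)\in\mathbb{N}_0^k$ (for $k=0$, $C(m,n,0)=\delta_{n0}$). *)

theory Defs
  imports "HOL-Computational_Algebra.Formal_Power_Series" "HOL-Library.FuncSet"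
begin

text \<open>The formal power series of z^m/m! / (e^z - sum_{k<m} z^k/k!).
  Its constant coefficient is 1.\<close>
definition ratio_fps :: "nat \<Rightarrow> real fps" where
  "ratio_fps m = (fps_X ^ m / fps_const (fact m)) /
      (fps_exp 1 - (\<Sum>k<m. fps_X ^ k / fps_const (fact k)))"

text \<open>Real power F^a of a power series F with constant term 1:
  the binomial series (1+w)^a = sum (a gchoose k) w^k composed with w = F - 1.\<close>
definition fps_powr_real :: "real fps \<Rightarrow> real \<Rightarrow> real fps" where
  "fps_powr_real F a = fps_compose (fps_binomial a) (F - 1)"

definition Bpoly :: "nat \<Rightarrow> real \<Rightarrow> nat \<Rightarrow> real \<Rightarrow> real" where
  "Bpoly n t m x = fact n * fps_nth (fps_powr_real (ratio_fps m) t * fps_exp x) n"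

definition Ccoef :: "nat \<Rightarrow> nat \<Rightarrow> nat \<Rightarrow> real" where
  "Ccoef m n k = fact n * (fact m) ^ k *
     (\<Sum>j\<in>{j \<in> {0..<k} \<rightarrow>\<^sub>E {0..n}. (\<Sum>i<k. j i) = n}.
        1 / (\<Prod>i<k. fact (m + j i)))"

end

theory Submission
  imports Defs
begin
unbundle fps_syntax


lemma I1:
  fixes a :: real
  assumes "j \<le> n"
  shows "(\<Sum>k=0..n. (a gchoose k) * ((real n - a) gchoose (n-k)) * (of_nat k gchoose j)) = a gchoose j"
proof -
  have z: "(\<Sum>k=0..<j. (a gchoose k) * ((real n - a) gchoose (n-k)) * (of_nat k gchoose j)) = 0"
    by (intro sum.neutral ballI) (simp add: binomial_gbinomial[symmetric])
  have sp: "{0..n} = {0..<j} \<union> {j..n}" using assms by auto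
  have "(\<Sum>k=0..n. (a gchoose k) * ((real n - a) gchoose (n-k)) * (of_nat k gchoose j))
      = (\<Sum>k=j..n. (a gchoose k) * ((real n - a) gchoose (n-k)) * (of_nat k gchoose j))"
    unfolding sp by (subst sum.union_disjoint) (auto simp: z)
  also have "\<dots> = (\<Sum>k=j..n. (a gchoose j) * ((a - of_nat j) gchoose (k - j)) * ((real n - a) gchoose (n-k)))"
    by (intro sum.cong refl) (simp add: gbinomial_trinomial_revision mult_ac)
  also have "\<dots> = (\<Sum>l=0..n-j. (a gchoose j) * ((a - of_nat j) gchoose l) * ((real n - a) gchoose (n-j-l)))"
  proof -
    have "{j..n} = (\<lambda>l. l + j) ` {0..n-j}" using assms
      by (auto simp: image_iff intro!: exI[of _ "x - j" for x])
    then show ?thesis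
      by (subst \<open>{j..n} = _\<close>, subst sum.reindex) (auto simp: inj_on_def add.commute intro!: sum.cong)
  qed
  also have "\<dots> = (a gchoose j) * (\<Sum>l=0..n-j. ((a - of_nat j) gchoose l) * ((real n - a) gchoose (n-j-l)))"
    by (simp add: sum_distrib_left mult_ac)
  also have "\<dots> = (a gchoose j) * ((a - of_nat j + (real n - a)) gchoose (n - j))"
    by (subst gbinomial_Vandermonde) simp
  also have "a - of_nat j + (real n - a) = of_nat (n - j)" using assms by simp
  finally show ?thesis by (simp add: binomial_gbinomial[symmetric])
qed

lemma I2:
  fixes a :: real
  assumes "i \<le> n"
  shows "(\<Sum>k=0..n. (a gchoose k) * ((real n - a) gchoose (n-k)) * ((- of_nat k) gchoose i)) = (- a) gchoose i"
proof -
  have neg: "\<And>x::real. ((- x) gchoose i) = (-1)^i * (\<Sum>j=0..i. (x gchoose j) * ((of_nat i - 1) gchoose (i - j)))"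
  proof -
    fix x :: real
    have "((- x) gchoose i) = (-1)^i * ((x + (of_nat i - 1)) gchoose i)"
      by (subst gbinomial_negated_upper) (simp add: algebra_simps)
    also have "\<dots> = (-1)^i * (\<Sum>j=0..i. (x gchoose j) * ((of_nat i - 1) gchoose (i - j)))"
      by (subst gbinomial_Vandermonde) simp
    finally show "((- x) gchoose i) = \<dots>" .
  qed
  have "(\<Sum>k=0..n. (a gchoose k) * ((real n - a) gchoose (n-k)) * ((- of_nat k) gchoose i))
     = (-1)^i * (\<Sum>j=0..i. ((of_nat i - 1) gchoose (i - j)) *
          (\<Sum>k=0..n. (a gchoose k) * ((real n - a) gchoose (n-k)) * (of_nat k gchoose j)))"
    by (simp add: neg sum_distrib_left sum_distrib_right mult_ac sum.swap[of _ "{0..i}"])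
  also have "\<dots> = (-1)^i * (\<Sum>j=0..i. ((of_nat i - 1) gchoose (i - j)) * (a gchoose j))"
    using assms by (intro arg_cong[where f="\<lambda>x. (-1)^i * x"] sum.cong refl) (simp add: I1)
  also have "\<dots> = (- a) gchoose i"
    by (subst neg[of a]) (simp add: mult_ac)
  finally show ?thesis .
qed




definition Gm :: "nat \<Rightarrow> real fps" where
  "Gm m = Abs_fps (\<lambda>j. fact m / fact (m + j))"

lemma Gm0[simp]: "Gm m $ 0 = 1" by (simp add: Gm_def)

lemma exp_minus: "fps_exp 1 - (\<Sum>k<m. fps_X ^ k / fps_const (fact k)) =
   fps_X ^ m * (fps_const (1 / fact m) * Gm m)"
proof (rule fps_ext)
  fix n
  have d: "\<And>k. fps_X ^ k / fps_const (fact k) = fps_const (1 / fact k) * (fps_X ^ k :: real fps)"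
    by (simp add: fps_divide_unit fps_const_inverse mult_ac inverse_eq_divide)
  have s: "(\<Sum>k<m. fps_X ^ k / fps_const (fact k)) $ n = (if n < m then 1 / fact n else (0::real))"
  proof -
    have "(\<Sum>k<m. fps_X ^ k / fps_const (fact k)) $ n = (\<Sum>k<m. if n = k then 1 / fact k else (0::real))"
      unfolding fps_sum_nth by (intro sum.cong refl) (simp add: d fps_X_power_nth inverse_eq_divide)
    then show ?thesis by (simp add: sum.delta)
  qed
  show "(fps_exp 1 - (\<Sum>k<m. fps_X ^ k / fps_const (fact k))) $ n =
   (fps_X ^ m * (fps_const (1 / fact m) * Gm m)) $ n"
    by (simp only: fps_sub_nth s) (simp add: fps_X_power_mult_nth Gm_def)
qed

lemma ratio_eq: "ratio_fps m = inverse (Gm m)"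
proof -
  have n: "fps_X ^ m / fps_const (fact m) = fps_X ^ m * fps_const (1 / fact m :: real)"
    by (simp add: fps_divide_unit fps_const_inverse inverse_eq_divide)
  have "ratio_fps m = (fps_X ^ m * fps_const (1 / fact m)) / (fps_X ^ m * fps_const (1 / fact m) * Gm m)"
    unfolding ratio_fps_def n exp_minus by (simp add: mult_ac)
  also have "\<dots> = 1 / Gm m"
  proof -
    have A: "fps_X ^ m * fps_const (1 / fact m) \<noteq> (0::real fps)" by simp
    show ?thesis using div_mult_mult1[OF A, of 1 "Gm m"] by simp
  qed
  also have "\<dots> = inverse (Gm m)" by (simp add: fps_divide_unit)
  finally show ?thesis .
qed

lemma F1: "(fps_binomial a oo W) $ n = (\<Sum>i=0..n. (a gchoose i) * (W ^ i $ n))"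
  by (simp add: fps_compose_nth)

lemma F2:
  fixes G :: "real fps"
  assumes "G $ 0 = 1"
  shows "fps_binomial (- of_nat k) oo (inverse G - 1) = G ^ k"
proof -
  let ?W = "inverse G - 1"
  have w0: "?W $ 0 = 0" using assms by simp
  have "fps_binomial (- of_nat k) oo ?W = inverse ((1 + fps_X) ^ k) oo ?W"
    by (simp add: fps_binomial_minus_of_nat)
  also have "\<dots> = inverse (((1 + fps_X) oo ?W) ^ k)"
    using w0 by (simp add: fps_inverse_compose fps_compose_power)
  also have "(1 + fps_X) oo ?W = inverse G"
    using w0 by (simp add: fps_compose_add_distrib)
  also have "inverse (inverse G ^ k) = G ^ k"
    using assms by (simp add: fps_inverse_power)
  finally show ?thesis .
qed




lemma trunc_pow:
  fixes T F :: "real fps"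
  assumes "\<forall>i\<le>n. T$i = F$i"
  shows "\<forall>n'\<le>n. (T^k)$n' = (F^k)$n'"
proof (induction k)
  case 0 then show ?case by simp
next
  case (Suc k)
  show ?case
  proof (intro allI impI)
    fix n' assume "n' \<le> n"
    then show "(T^Suc k)$n' = (F^Suc k)$n'"
      using Suc assms by (auto simp: fps_mult_nth intro!: sum.cong)
  qed
qed

lemma fps_const_prod': "fps_const (prod f A) = (\<Prod>x\<in>A. fps_const (f x) :: real fps)"
  by (induction A rule: infinite_finite_induct) (simp_all add: fps_const_mult[symmetric] del: fps_const_mult)

lemma pow_nth:
  fixes F :: "real fps"
  shows "(F ^ k) $ n = (\<Sum>j\<in>{j \<in> {0..<k} \<rightarrow>\<^sub>E {0..n}. (\<Sum>i<k. j i) = n}. \<Prod>i<k. F $ (j i))"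
proof -
  define T where "T = (\<Sum>y\<in>{0..n}. fps_const (F$y) * fps_X ^ y)"
  have Tn: "\<forall>i\<le>n. T$i = F$i"
    by (auto simp: T_def fps_sum_nth fps_X_power_nth if_distrib[where f="\<lambda>x. _ * x"] cong: if_cong)
  have "(F ^ k) $ n = (T ^ k) $ n" using trunc_pow[OF Tn] by simp
  also have "T ^ k = (\<Prod>x\<in>{0..<k}. T)" by simp
  also have "\<dots> = (\<Sum>g\<in>{0..<k} \<rightarrow>\<^sub>E {0..n}. \<Prod>x\<in>{0..<k}. fps_const (F $ g x) * fps_X ^ g x)"
    unfolding T_def by (rule prod_sum_PiE) auto
  also have "\<dots> = (\<Sum>g\<in>{0..<k} \<rightarrow>\<^sub>E {0..n}. fps_const (\<Prod>x\<in>{0..<k}. F $ g x) * fps_X ^ (\<Sum>x\<in>{0..<k}. g x))"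
    by (simp add: prod.distrib fps_const_prod' power_sum)
  also have "\<dots> $ n = (\<Sum>g\<in>{0..<k} \<rightarrow>\<^sub>E {0..n}. if (\<Sum>x\<in>{0..<k}. g x) = n then (\<Prod>x\<in>{0..<k}. F $ g x) else 0)"
    unfolding fps_sum_nth by (intro sum.cong refl) (simp only: fps_mult_left_const_nth fps_X_power_nth, simp)
  also have "\<dots> = (\<Sum>j\<in>{j \<in> {0..<k} \<rightarrow>\<^sub>E {0..n}. (\<Sum>i<k. j i) = n}. \<Prod>i<k. F $ (j i))"
    unfolding atLeast0LessThan by (simp add: sum.inter_filter finite_PiE)
  finally show ?thesis .
qed




lemma Ccoef_eq: "Ccoef m n k = fact n * (Gm m ^ k) $ n"
proof -
  have "(Gm m ^ k) $ n = (\<Sum>j\<in>{j \<in> {0..<k} \<rightarrow>\<^sub>E {0..n}. (\<Sum>i<k. j i) = n}. \<Prod>i<k. fact m / fact (m + j i))"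
    by (simp add: pow_nth Gm_def)
  also have "\<dots> = (fact m) ^ k * (\<Sum>j\<in>{j \<in> {0..<k} \<rightarrow>\<^sub>E {0..n}. (\<Sum>i<k. j i) = n}. 1 / (\<Prod>i<k. fact (m + j i)))"
    by (simp add: sum_distrib_left prod_dividef)
  finally show ?thesis by (simp add: Ccoef_def)
qed

theorem corollary4p1:
  fixes t :: real and m n :: nat
  assumes "m \<ge> 1"
  shows "Bpoly n t m 0 =
    (\<Sum>k=0..n. ((- t) gchoose k) * ((real n + t) gchoose (n - k)) * Ccoef m n k)"
proof -
  define W where "W = ratio_fps m - 1"
  define e where "e i = (W ^ i) $ n" for i
  have WG: "W = inverse (Gm m) - 1" by (simp add: W_def ratio_eq)
  have L: "Bpoly n t m 0 = fact n * (\<Sum>i=0..n. (t gchoose i) * e i)"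
    by (simp add: Bpoly_def fps_powr_real_def W_def[symmetric] F1 e_def)
  have C: "Ccoef m n k = fact n * (\<Sum>i=0..n. ((- of_nat k) gchoose i) * e i)" for k
    unfolding Ccoef_eq F2[OF Gm0, symmetric] WG[symmetric] F1 e_def ..
  have I2': "(\<Sum>k=0..n. ((- t) gchoose k) * ((real n + t) gchoose (n - k)) * ((- of_nat k) gchoose i)) = t gchoose i"
    if "i \<le> n" for i using I2[of i n "-t"] that by simp
  have "(\<Sum>k=0..n. ((- t) gchoose k) * ((real n + t) gchoose (n - k)) * Ccoef m n k)
    = (\<Sum>k=0..n. \<Sum>i=0..n. fact n * e i * (((- t) gchoose k) * ((real n + t) gchoose (n - k)) * ((- of_nat k) gchoose i)))"
    unfolding C sum_distrib_left sum_distrib_right by (intro sum.cong refl) (simp add: mult_ac)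
  also have "\<dots> = (\<Sum>i=0..n. \<Sum>k=0..n. fact n * e i * (((- t) gchoose k) * ((real n + t) gchoose (n - k)) * ((- of_nat k) gchoose i)))"
    by (rule sum.swap)
  also have "\<dots> = (\<Sum>i=0..n. fact n * e i * (\<Sum>k=0..n. ((- t) gchoose k) * ((real n + t) gchoose (n - k)) * ((- of_nat k) gchoose i)))"
    by (simp only: sum_distrib_left)
  also have "\<dots> = (\<Sum>i=0..n. fact n * e i * (t gchoose i))"
    by (intro sum.cong refl) (simp add: I2')
  also have "\<dots> = fact n * (\<Sum>i=0..n. e i * (t gchoose i))"
    by (simp add: sum_distrib_left mult_ac)
  finally show ?thesis by (simp add: L mult_ac)
qed

end
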